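(* In the setting described in the context, for any sequence of constant pairs $(\eta_{n,1},\eta_{n,2})_{n=0}^{n_0}\in\mathbb{C}^{2(n_0+1)}$ the following are equivalent: (1) there exists a solution $\varphi$ on $\mathbb{R}$ of $(P-\lambda)\varphi=0$ with $\varphi=\eta_{n,1}g_n+\eta_{n,2}\bar g_n$ for every $n=0,1,\dots,n_0$; (2) the state $\Psi$ given by $\Psi(n)=(\eta_{n,1},\eta_{n-1,2})^T$ for $1\le n\le n_0$, $\Psi(-\infty)=\eta_{0,1}$, $\Psi(+\infty)=\eta_{n_0,2}$ satisfies $\mathcal{U}\Psi=\Psi$.
   Context: Let $h>0$, $P(h)=-h^2\frac{d^2}{dx^2}+V(x)$ on $\mathbb{R}$ with $V$ continuous and real-valued, and fix $\lambda>0$. Let $n_0\ge2$ and let $g_0,\dots,g_{n_0}$ be solutions of $(P-\lambda)g=0$ on $\mathbb{R}$ such that each pair $(g_n,\bar g_n)$ is a basis of the solution space, the Wronskian $\mathcal{W}(g_n,\bar g_n)$ is independent of $n$, and $(g_{n-1},\bar g_n)$ is linearly independent for each $1\le n\le n_0$. Define $T_n$ ($1\le n\le n_0$) by $(g_{n-1},\bar g_{n-1})T_n=(g_n,\bar g_n)$; then $T_n\in\mathcal{T}:=\{T=(t_{jk})\in SL(2,\mathbb{C}): t_{11}=\overline{t_{22}},\ t_{12}=\overline{t_{21}}\}$. Define $\mathcal{M}:\mathcal{T}\to\mathcal{S}:=\{M\in U(2): m_{11}=m_{22}\ne0\}$ by $\mathcal{M}\begin{pmatrix}p&\bar q\\ q&\bar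 p\end{pmatrix}=\frac1{\bar p}\begin{pmatrix}1&\bar q\\-q&1\end{pmatrix}$ and $U_n:=\mathcal{M}(T_n)$. Set $P_n:=\begin{pmatrix}1&0\\0&0\end{pmatrix}U_n$, $Q_n:=\begin{pmatrix}0&0\\0&1\end{pmatrix}U_n$. A state $\Psi$ consists of $\Psi(n)=(\Psi_1(n),\Psi_2(n))^T\in\mathbb{C}^2$ for $1\le n\le n_0$ and scalars $\Psi(\pm\infty)\in\mathbb{C}$. The evolution $\mathcal{U}$ is: $(\mathcal{U}\Psi)(n)=P_{n+1}\Psi(n+1)+Q_{n-1}\Psi(n-1)$ for $2\le n\le n_0-1$; $(\mathcal{U}\Psi)(-\infty)=(1,0)U_1\Psi(1)$; $(\mathcal{U}\Psi)(+\infty)=(0,1)U_{n_0}\Psi(n_0)$; $(\mathcal{U}\Psi)(1)=P_2\Psi(2)+(0,\Psi_2(1))^T$; $(\mathcal{U}\Psi)(n_0)=(\Psi_1(n_0),0)^T+Q_{n_0-1}\Psi(n_0-1)$. *)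

theory Defs
  imports "HOL-Analysis.Analysis"
begin

text \<open>Solutions of (P - lambda) phi = 0, i.e. -h^2 phi'' + V phi = lambda phi on the real line,
  for complex-valued phi.\<close>
definition is_sol :: "real \<Rightarrow> (real \<Rightarrow> real) \<Rightarrow> real \<Rightarrow> (real \<Rightarrow> complex) \<Rightarrow> bool" where
  "is_sol h V lam phi \<longleftrightarrow>
     (\<exists>phi'. \<forall>x. (phi has_vector_derivative phi' x) (at x) \<and>
        (phi' has_vector_derivative (complex_of_real ((V x - lam) / h\<^sup>2) * phi x)) (at x))"

definition wronskian :: "(real \<Rightarrow> complex) \<Rightarrow> (real \<Rightarrow> complex) \<Rightarrow> real \<Rightarrow> complex" where
  "wronskian f g x = f x * vector_derivative g (at x) - vector_derivative f (at x) * g x"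

definition lin_indep2 :: "(real \<Rightarrow> complex) \<Rightarrow> (real \<Rightarrow> complex) \<Rightarrow> bool" where
  "lin_indep2 f g \<longleftrightarrow> (\<forall>a b. (\<forall>x. a * f x + b * g x = 0) \<longrightarrow> a = 0 \<and> b = 0)"

definition sol_basis :: "real \<Rightarrow> (real \<Rightarrow> real) \<Rightarrow> real \<Rightarrow> (real \<Rightarrow> complex) \<Rightarrow> (real \<Rightarrow> complex) \<Rightarrow> bool" where
  "sol_basis h V lam f g \<longleftrightarrow> is_sol h V lam f \<and> is_sol h V lam g \<and> lin_indep2 f g \<and>
     (\<forall>phi. is_sol h V lam phi \<longrightarrow> (\<exists>a b. \<forall>x. phi x = a * f x + b * g x))"

definition Mmap :: "complex^2^2 \<Rightarrow> complex^2^2" where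
  "Mmap T = (let p = T $ 1 $ 1; q = T $ 2 $ 1 in
     vector [vector [1 / cnj p, cnj q / cnj p], vector [- q / cnj p, 1 / cnj p]])"

definition Pmat :: "complex^2^2 \<Rightarrow> complex^2^2" where
  "Pmat U = (vector [vector [1, 0], vector [0, 0]] :: complex^2^2) ** U"

definition Qmat :: "complex^2^2 \<Rightarrow> complex^2^2" where
  "Qmat U = (vector [vector [0, 0], vector [0, 1]] :: complex^2^2) ** U"

text \<open>A state: interior part (meaningful on {1..n0}, zero elsewhere), value at -infinity,
  value at +infinity.\<close>
type_synonym state = "(nat \<Rightarrow> complex^2) \<times> complex \<times> complex"

definition evol :: "(nat \<Rightarrow> complex^2^2) \<Rightarrow> nat \<Rightarrow> state \<Rightarrow> state" where
  "evol U n0 S = (case S of (Psi, _, _) \<Rightarrow>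
     ((\<lambda>n. if n < 1 \<or> n > n0 then 0
           else if n = 1 then Pmat (U 2) *v Psi 2 + vector [0, Psi 1 $ 2]
           else if n = n0 then vector [Psi n0 $ 1, 0] + Qmat (U (n0 - 1)) *v Psi (n0 - 1)
           else Pmat (U (n + 1)) *v Psi (n + 1) + Qmat (U (n - 1)) *v Psi (n - 1)),
      (U 1 *v Psi 1) $ 1,
      (U n0 *v Psi n0) $ 2))"

definition state_of :: "nat \<Rightarrow> (nat \<Rightarrow> complex) \<Rightarrow> (nat \<Rightarrow> complex) \<Rightarrow> state" where
  "state_of n0 eta1 eta2 =
     ((\<lambda>n. if n < 1 \<or> n > n0 then 0 else vector [eta1 n, eta2 (n - 1)]), eta1 0, eta2 n0)"

end

theory Submission
  imports Defs
begin

lemma uniq_ode: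
  fixes w w' :: "real \<Rightarrow> complex" and k :: "real \<Rightarrow> real"
  assumes cont: "continuous_on UNIV k"
  and d1: "\<And>x. (w has_vector_derivative w' x) (at x)"
  and d2: "\<And>x. (w' has_vector_derivative (complex_of_real (k x) * w x)) (at x)"
  and z1: "w x0 = 0" and z2: "w' x0 = 0"
  shows "w x = 0"
proof -
  define E where "E t = Re (w t * cnj (w t) + w' t * cnj (w' t))" for t
  define D where "D t = w' t * cnj (w t) + w t * cnj (w' t)" for t
  have Eeq: "E t = (cmod (w t))^2 + (cmod (w' t))^2" for t
  proof -
    have "w t * cnj (w t) + w' t * cnj (w' t) = of_real ((cmod (w t))^2 + (cmod (w' t))^2)"
      by (simp only: of_real_add complex_norm_square)
    then show ?thesis unfolding E_def by simp
  qed
  have E0: "E x0 = 0" using z1 z2 by (simp add: Eeq)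
  have Enn: "E t \<ge> 0" for t by (simp add: Eeq)
  have Ed: "(E has_real_derivative Re ((1 + of_real (k t)) * D t)) (at t)" for t
  proof -
    have a: "((\<lambda>t. w t * cnj (w t)) has_vector_derivative (w t * cnj (w' t) + w' t * cnj (w t))) (at t)"
      by (rule has_vector_derivative_mult[OF d1 has_vector_derivative_cnj[OF d1]])
    have b: "((\<lambda>t. w' t * cnj (w' t)) has_vector_derivative (w' t * cnj (of_real (k t) * w t) + of_real (k t) * w t * cnj (w' t))) (at t)"
      by (rule has_vector_derivative_mult[OF d2 has_vector_derivative_cnj[OF d2]])
    have "((\<lambda>t. w t * cnj (w t) + w' t * cnj (w' t)) has_vector_derivative
        (w t * cnj (w' t) + w' t * cnj (w t) + (w' t * cnj (of_real (k t) * w t) + of_real (k t) * w t * cnj (w' t)))) (at t)"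
      by (rule has_vector_derivative_add[OF a b])
    from has_field_derivative_Re[OF this] show ?thesis
      unfolding E_def[abs_def] D_def by (simp add: algebra_simps)
  qed
  have bnd: "cmod ((1 + of_real (k t)) * D t) \<le> \<bar>1 + k t\<bar> * E t" for t
  proof -
    have "cmod (D t) \<le> cmod (w' t * cnj (w t)) + cmod (w t * cnj (w' t))"
      unfolding D_def by (rule norm_triangle_ineq)
    also have "\<dots> = cmod (w' t) * cmod (w t) + cmod (w t) * cmod (w' t)"
      by (simp add: norm_mult)
    also have "\<dots> \<le> E t"
    proof -
      have "0 \<le> (cmod (w t) - cmod (w' t))^2" by simp
      then show "cmod (w' t) * cmod (w t) + cmod (w t) * cmod (w' t) \<le> E t" by (simp add: Eeq power2_diff algebra_simps)
    qed
    finally have "cmod (D t) \<le> E t" .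
    moreover have "cmod (1 + complex_of_real (k t)) = \<bar>1 + k t\<bar>"
      by (metis norm_of_real of_real_1 of_real_add)
    ultimately show ?thesis by (simp add: norm_mult mult_left_mono)
  qed
  have "E x = 0"
  proof (cases "x0 \<le> x")
    case True
    have "compact ((\<lambda>t. \<bar>1 + k t\<bar>) ` {x0..x})"
      by (intro compact_continuous_image continuous_intros continuous_on_subset[OF cont]) auto
    then have "bounded ((\<lambda>t. \<bar>1 + k t\<bar>) ` {x0..x})" by (rule compact_imp_bounded)
    then obtain C where C0: "\<forall>y\<in>(\<lambda>t. \<bar>1 + k t\<bar>) ` {x0..x}. \<bar>y\<bar> \<le> C"
      unfolding bounded_real by blast
    have C: "\<And>t. t \<in> {x0..x} \<Longrightarrow> \<bar>1 + k t\<bar> \<le> C" using C0 by fastforce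
    define F where "F t = E t * exp (- C * t)" for t
    have "F x0 \<ge> F x"
    proof (rule DERIV_nonpos_imp_nonincreasing[OF True])
      fix t assume t: "x0 \<le> t" "t \<le> x"
      have ex: "((\<lambda>t. exp (- C * t)) has_real_derivative (exp (- C * t) * (- C))) (at t)"
        by (auto intro!: derivative_eq_intros)
      have "(F has_real_derivative (E t * (exp (- C * t) * (- C)) + Re ((1 + of_real (k t)) * D t) * exp (- C * t))) (at t)"
        unfolding F_def[abs_def] by (rule DERIV_mult'[OF Ed ex])
      moreover have "E t * (exp (- C * t) * (- C)) + Re ((1 + of_real (k t)) * D t) * exp (- C * t) \<le> 0"
      proof -
        have "Re ((1 + of_real (k t)) * D t) \<le> C * E t"
        proof -
          have "\<bar>1+k t\<bar> * E t \<le> C * E t" using C[of t] t Enn[of t] by (intro mult_right_mono) auto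
          then show ?thesis using abs_Re_le_cmod[of "(1 + of_real (k t)) * D t"] bnd[of t] by linarith
        qed
        then have "(Re ((1 + of_real (k t)) * D t) - C * E t) * exp (- C * t) \<le> 0"
          by (simp add: mult_nonpos_nonneg)
        then show ?thesis by (simp add: algebra_simps)
      qed
      ultimately show "\<exists>y. DERIV F t :> y \<and> y \<le> 0" by blast
    qed
    then have "E x * exp (- C * x) \<le> 0" using E0 unfolding F_def by simp
    then have "E x \<le> 0" by (simp add: mult_le_0_iff)
    then show ?thesis using Enn[of x] by linarith
  next
    case False
    then have le: "x \<le> x0" by simp
    have "compact ((\<lambda>t. \<bar>1 + k t\<bar>) ` {x..x0})"
      by (intro compact_continuous_image continuous_intros continuous_on_subset[OF cont]) auto
    then have "bounded ((\<lambda>t. \<bar>1 + k t\<bar>) ` {x..x0})" by (rule compact_imp_bounded)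
    then obtain C where C0: "\<forall>y\<in>(\<lambda>t. \<bar>1 + k t\<bar>) ` {x..x0}. \<bar>y\<bar> \<le> C"
      unfolding bounded_real by blast
    have C: "\<And>t. t \<in> {x..x0} \<Longrightarrow> \<bar>1 + k t\<bar> \<le> C" using C0 by fastforce
    define F where "F t = E t * exp (C * t)" for t
    have "F x \<le> F x0"
    proof (rule DERIV_nonneg_imp_nondecreasing[OF le])
      fix t assume t: "x \<le> t" "t \<le> x0"
      have ex: "((\<lambda>t. exp (C * t)) has_real_derivative (exp (C * t) * C)) (at t)"
        by (auto intro!: derivative_eq_intros)
      have "(F has_real_derivative (E t * (exp (C * t) * C) + Re ((1 + of_real (k t)) * D t) * exp (C * t))) (at t)"
        unfolding F_def[abs_def] by (rule DERIV_mult'[OF Ed ex])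
      moreover have "E t * (exp (C * t) * C) + Re ((1 + of_real (k t)) * D t) * exp (C * t) \<ge> 0"
      proof -
        have "- Re ((1 + of_real (k t)) * D t) \<le> C * E t"
        proof -
          have "\<bar>1+k t\<bar> * E t \<le> C * E t" using C[of t] t Enn[of t] by (intro mult_right_mono) auto
          then show ?thesis using abs_Re_le_cmod[of "(1 + of_real (k t)) * D t"] bnd[of t] by linarith
        qed
        then have "(Re ((1 + of_real (k t)) * D t) + C * E t) * exp (C * t) \<ge> 0"
          by simp
        then show ?thesis by (simp add: algebra_simps)
      qed
      ultimately show "\<exists>y. DERIV F t :> y \<and> y \<ge> 0" by blast
    qed
    then have "E x * exp (C * x) \<le> 0" using E0 unfolding F_def by simp
    then have "E x \<le> 0" by (simp add: mult_le_0_iff)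
    then show ?thesis using Enn[of x] by linarith
  qed
  then show ?thesis unfolding Eeq
    by (simp add: add_nonneg_eq_0_iff)
qed


lemma is_solD:
  assumes "is_sol h V lam f"
  obtains f' where "\<And>x. (f has_vector_derivative f' x) (at x)"
    "\<And>x. (f' has_vector_derivative (complex_of_real ((V x - lam) / h\<^sup>2) * f x)) (at x)"
  using assms that unfolding is_sol_def by blast

lemma is_sol_comb:
  assumes "is_sol h V lam f" "is_sol h V lam g"
  shows "is_sol h V lam (\<lambda>x. a * f x + b * g x)"
proof -
  obtain f' where f1: "\<And>x. (f has_vector_derivative f' x) (at x)"
    and f2: "\<And>x. (f' has_vector_derivative (complex_of_real ((V x - lam) / h\<^sup>2) * f x)) (at x)"
    using assms(1) unfolding is_sol_def by blast
  obtain g' where g1: "\<And>x. (g has_vector_derivative g' x) (at x)"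
    and g2: "\<And>x. (g' has_vector_derivative (complex_of_real ((V x - lam) / h\<^sup>2) * g x)) (at x)"
    using assms(2) unfolding is_sol_def by blast
  show ?thesis unfolding is_sol_def
  proof (intro exI allI conjI)
    fix x
    show "((\<lambda>x. a * f x + b * g x) has_vector_derivative (a * f' x + b * g' x)) (at x)"
      by (intro has_vector_derivative_add has_vector_derivative_mult_right f1 g1)
    show "((\<lambda>x. a * f' x + b * g' x) has_vector_derivative
       (complex_of_real ((V x - lam) / h\<^sup>2) * (a * f x + b * g x))) (at x)"
    proof (rule has_vector_derivative_eq_rhs)
      show "((\<lambda>x. a * f' x + b * g' x) has_vector_derivative
        (a * (complex_of_real ((V x - lam) / h\<^sup>2) * f x) + b * (complex_of_real ((V x - lam) / h\<^sup>2) * g x))) (at x)"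
        by (intro has_vector_derivative_add has_vector_derivative_mult_right f2 g2)
    qed (simp add: distrib_left mult.left_commute)
  qed
qed

lemma wronskian_nonzero:
  assumes cont: "continuous_on UNIV V"
    and s1: "is_sol h V lam f1" and s2: "is_sol h V lam f2" and li: "lin_indep2 f1 f2"
  shows "\<exists>x. wronskian f1 f2 x \<noteq> 0"
proof (rule ccontr)
  assume "\<not> ?thesis"
  then have W0: "\<And>x. wronskian f1 f2 x = 0" by blast
  define k where "k x = (V x - lam) / h\<^sup>2" for x
  have "k = (\<lambda>x. (V x - lam) * inverse (h\<^sup>2))" unfolding k_def[abs_def] by (simp add: divide_inverse)
  then have kc: "continuous_on UNIV k"
    by (simp only:) (intro continuous_on_mult continuous_on_diff cont continuous_on_const)
  obtain f1' where a1: "\<And>x. (f1 has_vector_derivative f1' x) (at x)"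
    and a2: "\<And>x. (f1' has_vector_derivative (complex_of_real (k x) * f1 x)) (at x)"
    using s1 unfolding k_def is_sol_def by blast
  obtain f2' where b1: "\<And>x. (f2 has_vector_derivative f2' x) (at x)"
    and b2: "\<And>x. (f2' has_vector_derivative (complex_of_real (k x) * f2 x)) (at x)"
    using s2 unfolding k_def is_sol_def by blast
  have "\<exists>x0. f1 x0 \<noteq> 0"
  proof (rule ccontr)
    assume "\<not> ?thesis"
    then have "\<forall>x. 1 * f1 x + 0 * f2 x = 0" by simp
    then have "(1::complex) = 0 \<and> (0::complex) = 0" using li unfolding lin_indep2_def by blast
    then show False by simp
  qed
  then obtain x0 where x0: "f1 x0 \<noteq> 0" by blast
  define c where "c = f2 x0 / f1 x0"
  define w where "w x = f2 x - c * f1 x" for x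
  define w' where "w' x = f2' x - c * f1' x" for x
  have d1: "(w has_vector_derivative w' x) (at x)" for x
    unfolding w_def[abs_def] w'_def
    by (intro has_vector_derivative_diff has_vector_derivative_mult_right a1 b1)
  have d2: "(w' has_vector_derivative (complex_of_real (k x) * w x)) (at x)" for x
    unfolding w_def w'_def[abs_def]
  proof (rule has_vector_derivative_eq_rhs)
    show "((\<lambda>x. f2' x - c * f1' x) has_vector_derivative
       (complex_of_real (k x) * f2 x - c * (complex_of_real (k x) * f1 x))) (at x)"
      by (intro has_vector_derivative_diff has_vector_derivative_mult_right a2 b2)
  qed (simp add: right_diff_distrib mult.left_commute)
  have z1: "w x0 = 0" unfolding w_def c_def using x0 by simp
  have "f1 x0 * f2' x0 - f1' x0 * f2 x0 = 0"
    using W0[of x0] unfolding wronskian_def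
    by (simp add: vector_derivative_at[OF a1] vector_derivative_at[OF b1])
  moreover have cf: "c * f1 x0 = f2 x0" using x0 unfolding c_def by simp
  moreover have "w' x0 * f1 x0 = f2' x0 * f1 x0 - f1' x0 * (c * f1 x0)"
    unfolding w'_def by (simp add: algebra_simps)
  ultimately have "w' x0 * f1 x0 = 0" by (simp add: algebra_simps)
  then have z2: "w' x0 = 0" using x0 by simp
  have "\<forall>x. (- c) * f1 x + 1 * f2 x = 0"
  proof
    fix x
    have "w x = 0" by (rule uniq_ode[OF kc d1 d2 z1 z2])
    then show "(- c) * f1 x + 1 * f2 x = 0" unfolding w_def by (simp add: algebra_simps)
  qed
  then have "(- c) = 0 \<and> (1::complex) = 0" using li unfolding lin_indep2_def by blast
  then show False by simp
qed

lemma wronskian_comb: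
  assumes a1: "\<And>x. (f1 has_vector_derivative f1' x) (at x)"
    and b1: "\<And>x. (f2 has_vector_derivative f2' x) (at x)"
  shows "wronskian (\<lambda>x. \<alpha> * f1 x + \<beta> * f2 x) (\<lambda>x. \<gamma> * f1 x + \<delta> * f2 x) x
       = (\<alpha> * \<delta> - \<beta> * \<gamma>) * wronskian f1 f2 x"
proof -
  have "((\<lambda>x. \<alpha> * f1 x + \<beta> * f2 x) has_vector_derivative (\<alpha> * f1' x + \<beta> * f2' x)) (at x)"
    by (intro has_vector_derivative_add has_vector_derivative_mult_right a1 b1)
  moreover have "((\<lambda>x. \<gamma> * f1 x + \<delta> * f2 x) has_vector_derivative (\<gamma> * f1' x + \<delta> * f2' x)) (at x)"
    by (intro has_vector_derivative_add has_vector_derivative_mult_right a1 b1)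
  ultimately have v: "vector_derivative (\<lambda>x. \<alpha> * f1 x + \<beta> * f2 x) (at x) = \<alpha> * f1' x + \<beta> * f2' x"
    "vector_derivative (\<lambda>x. \<gamma> * f1 x + \<delta> * f2 x) (at x) = \<gamma> * f1' x + \<delta> * f2' x"
    by (simp_all add: vector_derivative_at)
  have "vector_derivative f1 (at x) = f1' x" "vector_derivative f2 (at x) = f2' x"
    by (simp_all add: vector_derivative_at a1 b1)
  then show ?thesis unfolding wronskian_def v by (simp add: algebra_simps)
qed

lemma Pmat_comp: "(Pmat U *v v) $ 1 = (U *v v) $ 1" "(Pmat U *v v) $ 2 = 0"
  unfolding Pmat_def matrix_vector_mul_assoc[symmetric]
  by (simp_all add: matrix_vector_mult_def sum_2)

lemma Qmat_comp: "(Qmat U *v v) $ 1 = 0" "(Qmat U *v v) $ 2 = (U *v v) $ 2"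
  unfolding Qmat_def matrix_vector_mul_assoc[symmetric]
  by (simp_all add: matrix_vector_mult_def sum_2)

lemma vec2_eq: "(x :: complex^2) = y \<longleftrightarrow> x $ 1 = y $ 1 \<and> x $ 2 = y $ 2"
  by (simp add: vec_eq_iff forall_2)

lemma mm:
  assumes det: "p * cnj p - q * cnj q = 1" and T1: "T $ 1 $ 1 = p" and T2: "T $ 2 $ 1 = q"
  shows "((Mmap T *v vector [a, e]) $ 1 = c \<and> (Mmap T *v vector [a, e]) $ 2 = b)
     \<longleftrightarrow> (c = p * a + cnj q * b \<and> e = q * a + cnj p * b)"
proof -
  have p0: "cnj p \<noteq> 0"
  proof
    assume "cnj p = 0"
    then have "- (q * cnj q) = 1" using det by simp
    then have "q * cnj q = -1" by (metis minus_minus)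
    moreover have "q * cnj q = of_real ((cmod q)^2)" by (rule complex_norm_square[symmetric])
    ultimately have "(cmod q)^2 = -1"
      by (metis of_real_1 of_real_eq_iff of_real_minus)
    then show False by (smt (verit) zero_le_power2)
  qed
  have e1: "(Mmap T *v vector [a, e]) $ 1 = (a + cnj q * e) / cnj p"
    unfolding Mmap_def Let_def T1 T2
    by (simp add: matrix_vector_mult_def sum_2 add_divide_distrib)
  have e2: "(Mmap T *v vector [a, e]) $ 2 = (e - q * a) / cnj p"
    unfolding Mmap_def Let_def T1 T2
    by (simp add: matrix_vector_mult_def sum_2 diff_divide_distrib)
  have s2: "(e - q * a) / cnj p = b \<longleftrightarrow> e = q * a + cnj p * b"
    using p0 by (auto simp: field_simps)
  have s1: "e = q * a + cnj p * b \<Longrightarrow> (a + cnj q * e) / cnj p = p * a + cnj q * b"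
  proof -
    assume "e = q * a + cnj p * b"
    then have "a + cnj q * e = (1 + q * cnj q) * a + cnj q * cnj p * b" by (simp add: algebra_simps)
    also have "1 + q * cnj q = p * cnj p" using det by (simp add: algebra_simps)
    finally have "a + cnj q * e = cnj p * (p * a + cnj q * b)" by (simp add: algebra_simps)
    then show ?thesis using p0 by simp
  qed
  show ?thesis unfolding e1 e2 using s1 s2 by auto
qed

lemma evol_fst:
  assumes "2 \<le> n0" "1 \<le> n" "n \<le> n0"
  shows "fst (evol U n0 (state_of n0 e1 e2)) n =
    (if n = 1 then vector [(U 2 *v vector [e1 2, e2 1]) $ 1, e2 0]
     else if n = n0 then vector [e1 n0, (U (n0 - 1) *v vector [e1 (n0 - 1), e2 (n0 - 2)]) $ 2]
     else vector [(U (n + 1) *v vector [e1 (n + 1), e2 n]) $ 1,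
                  (U (n - 1) *v vector [e1 (n - 1), e2 (n - 2)]) $ 2])"
proof -
  define Psi where "Psi = fst (state_of n0 e1 e2)"
  have Psi: "Psi k = vector [e1 k, e2 (k - 1)]" if "1 \<le> k" "k \<le> n0" for k
    using that unfolding Psi_def state_of_def by simp
  have st: "state_of n0 e1 e2 = (Psi, e1 0, e2 n0)" unfolding Psi_def state_of_def by simp
  have ev: "fst (evol U n0 (state_of n0 e1 e2)) n =
     (if n = 1 then Pmat (U 2) *v Psi 2 + vector [0, Psi 1 $ 2]
           else if n = n0 then vector [Psi n0 $ 1, 0] + Qmat (U (n0 - 1)) *v Psi (n0 - 1)
           else Pmat (U (n + 1)) *v Psi (n + 1) + Qmat (U (n - 1)) *v Psi (n - 1))"
    unfolding st evol_def using assms(2,3) by simp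
  show ?thesis
  proof (cases "n = 1")
    case True
    have "Psi 2 = vector [e1 2, e2 1]" "Psi 1 = vector [e1 1, e2 0]"
      using Psi[of 2] Psi[of 1] assms(1) by simp_all
    note eqs = this
    show ?thesis unfolding ev eqs using True by (simp add: vec2_eq Pmat_comp)
  next
    case False
    show ?thesis
    proof (cases "n = n0")
      case True
      have "Psi n0 = vector [e1 n0, e2 (n0 - 1)]" "Psi (n0 - 1) = vector [e1 (n0 - 1), e2 (n0 - 2)]"
        using Psi[of n0] Psi[of "n0 - 1"] assms(1) by (simp_all add: numeral_2_eq_2)
      note eqs = this
    show ?thesis unfolding ev eqs using True False by (simp add: vec2_eq Qmat_comp)
    next
      case F2: False
      have "Psi (n + 1) = vector [e1 (n + 1), e2 n]" "Psi (n - 1) = vector [e1 (n - 1), e2 (n - 2)]"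
        using Psi[of "n + 1"] Psi[of "n - 1"] assms(2,3) False F2 by (simp_all add: numeral_2_eq_2)
      note eqs = this
    show ?thesis unfolding ev eqs using False F2 by (simp add: vec2_eq Pmat_comp Qmat_comp)
    qed
  qed
qed

lemma evol_fix:
  assumes n0: "2 \<le> n0"
  shows "evol U n0 (state_of n0 e1 e2) = state_of n0 e1 e2 \<longleftrightarrow>
    (\<forall>m. 1 \<le> m \<and> m \<le> n0 \<longrightarrow> (U m *v vector [e1 m, e2 (m - 1)]) $ 1 = e1 (m - 1)
       \<and> (U m *v vector [e1 m, e2 (m - 1)]) $ 2 = e2 m)" (is "?L \<longleftrightarrow> ?R")
proof -
  define S where "S = state_of n0 e1 e2"
  have fstS: "fst S n = vector [e1 n, e2 (n - 1)]" if "1 \<le> n" "n \<le> n0" for n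
    using that unfolding S_def state_of_def by auto
  have fstS0: "fst S n = 0" if "\<not> (1 \<le> n \<and> n \<le> n0)" for n
    using that unfolding S_def state_of_def by auto
  have fstE0: "fst (evol U n0 S) n = 0" if "\<not> (1 \<le> n \<and> n \<le> n0)" for n
    using that unfolding S_def evol_def by (auto split: prod.splits)
  have sndE: "fst (snd (evol U n0 S)) = (U 1 *v vector [e1 1, e2 0]) $ 1"
     "snd (snd (evol U n0 S)) = (U n0 *v vector [e1 n0, e2 (n0 - 1)]) $ 2"
    using n0 unfolding S_def evol_def state_of_def by auto
  have sndS: "fst (snd S) = e1 0" "snd (snd S) = e2 n0" unfolding S_def state_of_def by auto
  have L: "?L \<longleftrightarrow> (\<forall>n. 1 \<le> n \<and> n \<le> n0 \<longrightarrow> fst (evol U n0 S) n = fst S n)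
      \<and> (U 1 *v vector [e1 1, e2 0]) $ 1 = e1 0 \<and> (U n0 *v vector [e1 n0, e2 (n0 - 1)]) $ 2 = e2 n0"
    unfolding S_def[symmetric]
    apply (simp only: prod_eq_iff fun_eq_iff sndE sndS)
    using fstE0 fstS0 by metis
  have F: "fst (evol U n0 S) n = fst S n \<longleftrightarrow>
    (if n = 1 then (U 2 *v vector [e1 2, e2 1]) $ 1 = e1 1
     else if n = n0 then (U (n0 - 1) *v vector [e1 (n0 - 1), e2 (n0 - 2)]) $ 2 = e2 (n0 - 1)
     else (U (n + 1) *v vector [e1 (n + 1), e2 n]) $ 1 = e1 n \<and>
          (U (n - 1) *v vector [e1 (n - 1), e2 (n - 2)]) $ 2 = e2 (n - 1))"
    if "1 \<le> n" "n \<le> n0" for n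
    using that n0 unfolding S_def
    by (simp add: evol_fst fstS[unfolded S_def] vec2_eq)
  show ?thesis
  proof
    assume ?L
    then have A: "\<And>n. 1 \<le> n \<Longrightarrow> n \<le> n0 \<Longrightarrow> fst (evol U n0 S) n = fst S n"
      and B1: "(U 1 *v vector [e1 1, e2 0]) $ 1 = e1 0"
      and B2: "(U n0 *v vector [e1 n0, e2 (n0 - 1)]) $ 2 = e2 n0" using L by auto
    show ?R
    proof (intro allI impI conjI)
      fix m assume m: "1 \<le> m \<and> m \<le> n0"
      show "(U m *v vector [e1 m, e2 (m - 1)]) $ 1 = e1 (m - 1)"
      proof (cases "m = 1")
        case True then show ?thesis using B1 by simp
      next
        case False
        obtain n where mn: "m = Suc n" using m by (cases m) auto
        then have n: "1 \<le> n" "n \<le> n0" "n \<noteq> n0" using m False by auto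
        have X: "if n = 1 then (U 2 *v vector [e1 2, e2 1]) $ 1 = e1 1
            else if n = n0 then (U (n0 - 1) *v vector [e1 (n0 - 1), e2 (n0 - 2)]) $ 2 = e2 (n0 - 1)
            else (U (n + 1) *v vector [e1 (n + 1), e2 n]) $ 1 = e1 n \<and>
              (U (n - 1) *v vector [e1 (n - 1), e2 (n - 2)]) $ 2 = e2 (n - 1)"
          using F[OF n(1,2)] A[OF n(1,2)] by blast
        show ?thesis
        proof (cases "n = 1")
          case True
          then show ?thesis using X mn by (simp add: numeral_2_eq_2)
        next
          case False
          then show ?thesis using X mn n(3) by simp
        qed
      qed
      show "(U m *v vector [e1 m, e2 (m - 1)]) $ 2 = e2 m"
      proof (cases "m = n0")
        case True then show ?thesis using B2 by simp
      next
        case False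
        then have n: "1 \<le> m + 1" "m + 1 \<le> n0" "m + 1 \<noteq> 1" using m by auto
        have X: "if m + 1 = 1 then (U 2 *v vector [e1 2, e2 1]) $ 1 = e1 1
            else if m + 1 = n0 then (U (n0 - 1) *v vector [e1 (n0 - 1), e2 (n0 - 2)]) $ 2 = e2 (n0 - 1)
            else (U (m + 1 + 1) *v vector [e1 (m + 1 + 1), e2 (m + 1)]) $ 1 = e1 (m + 1) \<and>
              (U (m + 1 - 1) *v vector [e1 (m + 1 - 1), e2 (m + 1 - 2)]) $ 2 = e2 (m + 1 - 1)"
          using F[OF n(1,2)] A[OF n(1,2)] by blast
        show ?thesis
        proof (cases "m + 1 = n0")
          case True
          then have "n0 - 1 = m" "n0 - 2 = m - 1" by auto
          then show ?thesis using X True n(3) by simp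
        next
          case False
          have "m + 1 - 2 = m - 1" by simp
          then show ?thesis using X False n(3) by simp
        qed
      qed
    qed
  next
    assume R: ?R
    have "fst (evol U n0 S) n = fst S n" if n: "1 \<le> n" "n \<le> n0" for n
    proof -
      have r2: "(U 2 *v vector [e1 2, e2 1]) $ 1 = e1 1" using R[rule_format, of 2] n0
        by (simp add: numeral_2_eq_2)
      have r3: "(U (n0 - 1) *v vector [e1 (n0 - 1), e2 (n0 - 2)]) $ 2 = e2 (n0 - 1)"
        using R[rule_format, of "n0 - 1"] n0 by (simp add: numeral_2_eq_2)
      have r4: "(U (n + 1) *v vector [e1 (n + 1), e2 n]) $ 1 = e1 n \<and>
          (U (n - 1) *v vector [e1 (n - 1), e2 (n - 2)]) $ 2 = e2 (n - 1)"
        if "n \<noteq> 1" "n \<noteq> n0"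
      proof -
        have a: "1 \<le> n + 1 \<and> n + 1 \<le> n0" and b: "1 \<le> n - 1 \<and> n - 1 \<le> n0"
          using that n by auto
        have "n - 1 - 1 = n - 2" by simp
        then show ?thesis using R[rule_format, OF a] R[rule_format, OF b] by simp
      qed
      show ?thesis using F[OF n] r2 r3 r4 by auto
    qed
    moreover have "(U 1 *v vector [e1 1, e2 0]) $ 1 = e1 0" using R[rule_format, of 1] n0 by simp
    moreover have "(U n0 *v vector [e1 n0, e2 (n0 - 1)]) $ 2 = e2 n0" using R[rule_format, of n0] n0 by simp
    ultimately show ?L using L by blast
  qed
qed

theorem mainTheorem4:
  fixes h lam :: real and V :: "real \<Rightarrow> real" and n0 :: nat
    and g :: "nat \<Rightarrow> real \<Rightarrow> complex" and T :: "nat \<Rightarrow> complex^2^2"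
    and eta1 eta2 :: "nat \<Rightarrow> complex"
  assumes h_pos: "h > 0" and lam_pos: "lam > 0" and V_cont: "continuous_on UNIV V"
    and n0: "n0 \<ge> 2"
    and basis: "\<And>n. n \<le> n0 \<Longrightarrow> sol_basis h V lam (g n) (\<lambda>x. cnj (g n x))"
    and wr: "\<And>n x. n \<le> n0 \<Longrightarrow>
          wronskian (g n) (\<lambda>x. cnj (g n x)) x = wronskian (g 0) (\<lambda>x. cnj (g 0 x)) x"
    and indep: "\<And>n. 1 \<le> n \<Longrightarrow> n \<le> n0 \<Longrightarrow> lin_indep2 (g (n - 1)) (\<lambda>x. cnj (g n x))"
    and T_def: "\<And>n x. 1 \<le> n \<Longrightarrow> n \<le> n0 \<Longrightarrow>
          g n x = g (n - 1) x * T n $ 1 $ 1 + cnj (g (n - 1) x) * T n $ 2 $ 1 \<and>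
          cnj (g n x) = g (n - 1) x * T n $ 1 $ 2 + cnj (g (n - 1) x) * T n $ 2 $ 2"
  shows "(\<exists>phi. is_sol h V lam phi \<and>
            (\<forall>n \<le> n0. \<forall>x. phi x = eta1 n * g n x + eta2 n * cnj (g n x)))
         \<longleftrightarrow> evol (\<lambda>n. Mmap (T n)) n0 (state_of n0 eta1 eta2) = state_of n0 eta1 eta2"
proof -
  define p where "p n = T n $ 1 $ 1" for n
  define q where "q n = T n $ 2 $ 1" for n
  have sol: "is_sol h V lam (g n)" "is_sol h V lam (\<lambda>x. cnj (g n x))"
    "lin_indep2 (g n) (\<lambda>x. cnj (g n x))" if "n \<le> n0" for n
    using basis[OF that] unfolding sol_basis_def by auto
  have gn1: "g n x = p n * g (n - 1) x + q n * cnj (g (n - 1) x)"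
    if "1 \<le> n" "n \<le> n0" for n x
    using T_def[OF that, of x] unfolding p_def q_def by (simp add: mult.commute)
  have T12: "T n $ 1 $ 2 = cnj (q n) \<and> T n $ 2 $ 2 = cnj (p n)" if n: "1 \<le> n" "n \<le> n0" for n
  proof -
    have "\<forall>x. (cnj (q n) - T n $ 1 $ 2) * g (n - 1) x + (cnj (p n) - T n $ 2 $ 2) * cnj (g (n - 1) x) = 0"
    proof
      fix x
      have A: "cnj (g n x) = cnj (p n) * cnj (g (n - 1) x) + cnj (q n) * g (n - 1) x"
        using gn1[OF n, of x] by simp
      have B: "cnj (g n x) = g (n - 1) x * T n $ 1 $ 2 + cnj (g (n - 1) x) * T n $ 2 $ 2"
        using T_def[OF n, of x] by blast
      have "(cnj (q n) - T n $ 1 $ 2) * g (n - 1) x + (cnj (p n) - T n $ 2 $ 2) * cnj (g (n - 1) x)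
         = (cnj (p n) * cnj (g (n - 1) x) + cnj (q n) * g (n - 1) x) - (g (n - 1) x * T n $ 1 $ 2 + cnj (g (n - 1) x) * T n $ 2 $ 2)"
        by (simp add: algebra_simps)
      also have "\<dots> = 0" using A B by simp
      finally show "(cnj (q n) - T n $ 1 $ 2) * g (n - 1) x + (cnj (p n) - T n $ 2 $ 2) * cnj (g (n - 1) x) = 0" .
    qed
    moreover have "lin_indep2 (g (n - 1)) (\<lambda>x. cnj (g (n - 1) x))" using sol(3)[of "n - 1"] n by simp
    ultimately have "cnj (q n) - T n $ 1 $ 2 = 0 \<and> cnj (p n) - T n $ 2 $ 2 = 0"
      unfolding lin_indep2_def by blast
    then show ?thesis by simp
  qed
  have gn2: "cnj (g n x) = cnj (q n) * g (n - 1) x + cnj (p n) * cnj (g (n - 1) x)"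
    if "1 \<le> n" "n \<le> n0" for n x
  proof -
    have "cnj (g n x) = g (n - 1) x * T n $ 1 $ 2 + cnj (g (n - 1) x) * T n $ 2 $ 2"
      using T_def[OF that, of x] by blast
    also have "\<dots> = cnj (q n) * g (n - 1) x + cnj (p n) * cnj (g (n - 1) x)"
      using T12[OF that] by (simp add: mult.commute)
    finally show ?thesis .
  qed
  have det: "p n * cnj (p n) - q n * cnj (q n) = 1" if n: "1 \<le> n" "n \<le> n0" for n
  proof -
    have le: "n - 1 \<le> n0" using n by simp
    obtain f' where a1: "\<And>x. (g (n - 1) has_vector_derivative f' x) (at x)"
      using sol(1)[OF le] unfolding is_sol_def by blast
    obtain f'' where b1: "\<And>x. ((\<lambda>x. cnj (g (n - 1) x)) has_vector_derivative f'' x) (at x)"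
      using sol(2)[OF le] unfolding is_sol_def by blast
    have e1: "g n = (\<lambda>x. p n * g (n - 1) x + q n * cnj (g (n - 1) x))" using gn1[OF n] by auto
    have e2: "(\<lambda>x. cnj (g n x)) = (\<lambda>x. cnj (q n) * g (n - 1) x + cnj (p n) * cnj (g (n - 1) x))"
      using gn2[OF n] by auto
    have W: "wronskian (g n) (\<lambda>x. cnj (g n x)) x =
        (p n * cnj (p n) - q n * cnj (q n)) * wronskian (g (n - 1)) (\<lambda>x. cnj (g (n - 1) x)) x" for x
    proof -
      have "wronskian (g n) (\<lambda>x. cnj (g n x)) x = wronskian (\<lambda>x. p n * g (n - 1) x + q n * cnj (g (n - 1) x))
         (\<lambda>x. cnj (q n) * g (n - 1) x + cnj (p n) * cnj (g (n - 1) x)) x"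
        unfolding e2 by (simp only: e1)
      also have "\<dots> = (p n * cnj (p n) - q n * cnj (q n)) * wronskian (g (n - 1)) (\<lambda>x. cnj (g (n - 1) x)) x"
        by (rule wronskian_comb[OF a1 b1])
      finally show ?thesis .
    qed
    obtain x0 where x0: "wronskian (g 0) (\<lambda>x. cnj (g 0 x)) x0 \<noteq> 0"
      using wronskian_nonzero[OF V_cont sol(1,2,3)[of 0]] by auto
    have "wronskian (g 0) (\<lambda>x. cnj (g 0 x)) x0 =
        (p n * cnj (p n) - q n * cnj (q n)) * wronskian (g 0) (\<lambda>x. cnj (g 0 x)) x0"
      using W[of x0] wr[of n x0] wr[of "n - 1" x0] n by simp
    then have "(p n * cnj (p n) - q n * cnj (q n) - 1) * wronskian (g 0) (\<lambda>x. cnj (g 0 x)) x0 = 0"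
      by (simp add: algebra_simps)
    with x0 show ?thesis by simp
  qed
  define R where "R m \<longleftrightarrow> eta1 (m - 1) = p m * eta1 m + cnj (q m) * eta2 m \<and>
       eta2 (m - 1) = q m * eta1 m + cnj (p m) * eta2 m" for m
  have left: "(\<exists>phi. is_sol h V lam phi \<and>
            (\<forall>n \<le> n0. \<forall>x. phi x = eta1 n * g n x + eta2 n * cnj (g n x)))
     \<longleftrightarrow> (\<forall>m. 1 \<le> m \<and> m \<le> n0 \<longrightarrow> R m)"
  proof
    assume "\<exists>phi. is_sol h V lam phi \<and>
            (\<forall>n \<le> n0. \<forall>x. phi x = eta1 n * g n x + eta2 n * cnj (g n x))"
    then obtain phi where ph: "\<And>n x. n \<le> n0 \<Longrightarrow> phi x = eta1 n * g n x + eta2 n * cnj (g n x)"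
      by blast
    show "\<forall>m. 1 \<le> m \<and> m \<le> n0 \<longrightarrow> R m"
    proof (intro allI impI)
      fix m assume m: "1 \<le> m \<and> m \<le> n0"
      then have m1: "1 \<le> m" "m \<le> n0" "m - 1 \<le> n0" by auto
      have "\<forall>x. (p m * eta1 m + cnj (q m) * eta2 m - eta1 (m - 1)) * g (m - 1) x
         + (q m * eta1 m + cnj (p m) * eta2 m - eta2 (m - 1)) * cnj (g (m - 1) x) = 0"
      proof
        fix x
        have E: "eta1 m * g m x + eta2 m * cnj (g m x) = eta1 (m - 1) * g (m - 1) x + eta2 (m - 1) * cnj (g (m - 1) x)"
          using ph[OF m1(2), of x] ph[OF m1(3), of x] by simp
        have G1: "g m x = p m * g (m - 1) x + q m * cnj (g (m - 1) x)" using gn1[OF m1(1,2)] by this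
        have G2: "cnj (g m x) = cnj (q m) * g (m - 1) x + cnj (p m) * cnj (g (m - 1) x)" using gn2[OF m1(1,2)] by this
        have "(p m * eta1 m + cnj (q m) * eta2 m - eta1 (m - 1)) * g (m - 1) x
         + (q m * eta1 m + cnj (p m) * eta2 m - eta2 (m - 1)) * cnj (g (m - 1) x)
         = (eta1 m * (p m * g (m - 1) x + q m * cnj (g (m - 1) x)) + eta2 m * (cnj (q m) * g (m - 1) x + cnj (p m) * cnj (g (m - 1) x)))
           - (eta1 (m - 1) * g (m - 1) x + eta2 (m - 1) * cnj (g (m - 1) x))"
          by (simp add: algebra_simps)
        also have "\<dots> = 0" using E[unfolded G2, unfolded G1] by simp
        finally show "(p m * eta1 m + cnj (q m) * eta2 m - eta1 (m - 1)) * g (m - 1) x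
         + (q m * eta1 m + cnj (p m) * eta2 m - eta2 (m - 1)) * cnj (g (m - 1) x) = 0" .
      qed
      moreover have "lin_indep2 (g (m - 1)) (\<lambda>x. cnj (g (m - 1) x))" using sol(3)[OF m1(3)] by this
      ultimately have "p m * eta1 m + cnj (q m) * eta2 m - eta1 (m - 1) = 0 \<and> q m * eta1 m + cnj (p m) * eta2 m - eta2 (m - 1) = 0"
        unfolding lin_indep2_def by blast
      then show "R m" unfolding R_def by simp
    qed
  next
    assume R: "\<forall>m. 1 \<le> m \<and> m \<le> n0 \<longrightarrow> R m"
    define phi where "phi x = eta1 0 * g 0 x + eta2 0 * cnj (g 0 x)" for x
    have "is_sol h V lam phi" unfolding phi_def[abs_def]
      by (intro is_sol_comb sol) simp_all
    moreover have "\<forall>x. phi x = eta1 n * g n x + eta2 n * cnj (g n x)" if "n \<le> n0" for n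
      using that
    proof (induction n)
      case 0 then show ?case unfolding phi_def by simp
    next
      case (Suc n)
      have Rn: "R (Suc n)" using R Suc.prems by auto
      show ?case
      proof
        fix x
        have "phi x = eta1 n * g n x + eta2 n * cnj (g n x)" using Suc by simp
        also have "\<dots> = eta1 (Suc n) * g (Suc n) x + eta2 (Suc n) * cnj (g (Suc n) x)"
          using Rn gn1[of "Suc n" x] gn2[of "Suc n" x] Suc.prems unfolding R_def
          by (simp add: algebra_simps)
        finally show "phi x = eta1 (Suc n) * g (Suc n) x + eta2 (Suc n) * cnj (g (Suc n) x)" .
      qed
    qed
    ultimately show "\<exists>phi. is_sol h V lam phi \<and>
            (\<forall>n \<le> n0. \<forall>x. phi x = eta1 n * g n x + eta2 n * cnj (g n x))" by blast
  qed
  have right: "evol (\<lambda>n. Mmap (T n)) n0 (state_of n0 eta1 eta2) = state_of n0 eta1 eta2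
     \<longleftrightarrow> (\<forall>m. 1 \<le> m \<and> m \<le> n0 \<longrightarrow> R m)"
  proof -
    have M: "((Mmap (T m) *v vector [eta1 m, eta2 (m - 1)]) $ 1 = eta1 (m - 1) \<and>
        (Mmap (T m) *v vector [eta1 m, eta2 (m - 1)]) $ 2 = eta2 m) \<longleftrightarrow> R m"
      if "1 \<le> m" "m \<le> n0" for m
      unfolding R_def by (rule mm[OF det[OF that]]) (simp_all add: p_def q_def)
    have "evol (\<lambda>n. Mmap (T n)) n0 (state_of n0 eta1 eta2) = state_of n0 eta1 eta2 \<longleftrightarrow>
      (\<forall>m. 1 \<le> m \<and> m \<le> n0 \<longrightarrow> (Mmap (T m) *v vector [eta1 m, eta2 (m - 1)]) $ 1 = eta1 (m - 1) \<and>
        (Mmap (T m) *v vector [eta1 m, eta2 (m - 1)]) $ 2 = eta2 m)"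
      by (rule evol_fix[OF n0])
    then show ?thesis using M by blast
  qed
  show ?thesis using left right by simp
qed

end
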